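(* Let $\mathcal R$ be a sum-bucket game and $\mathbf p$ a routing. If a greedy move by player $i$ takes $\mathbf p$ to a routing $\mathbf p'$, then $\mathbf p'<\mathbf p$ in the order defined below (i.e. $M(\mathbf p')<M(\mathbf p)$).
   Context: A routing game $(\mathbf N,G,\mathcal P)$: players $\{1,\dots,N\}$ ($N\ge1$), a finite graph $G=(V,E)$, and for each player $i$ a nonempty finite set $\mathcal P_i$ of paths (each with at least one edge) from $u_i$ to $v_i$; $\mathcal P=\bigcup_i\mathcal P_i$, $L=\max_{p\in\mathcal P}|p|$ (number of edges). A routing is $\mathbf p=[p_1,\dots,p_N]$ with $p_i\in\mathcal P_i$; $(p_i';\mathbf p_{-i})$ replaces $p_i$ by $p_i'$. Sum-bucket game: for $k=0,1,\dots,\lceil\lg L\rceil$ the bucket $B_k$ is the set of paths in $\mathcal P$ with length in $[2^k,2^{k+1})$, and $B(q)$ is the index of the bucket of path $q$. The normalized length of a path $q$ is $\overline D_q=2^{B(q)+1}-1$. For a routing $\mathbf p$, an edge $e$ and a path $q$, $\overline C_{e,q}(\mathbf p)$ is the number of players $j$ with $e\in p_j$ and $B(p_j)=B(q)$, and $\overline C_q(\mathbf p)=\max_{e\in q}\overline C_{e,q}(\mathbf p)$. Player cost: $pc_i(\mathbf p)=\overline C_i(\mathbf p)+\overline D_i(\mathbf p)$ with $\overline C_i=\overline C_{p_i}$, $\overline D_i=\overline D_{p_i}$. A greedy move by player $i$ takes $\mathbf p$ to $(p_i';\mathbf p_{-i})$ with $p_i'\in\mathcal P_i$ and strictly smaller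 $pc_i$. Order: $r=N+2L-1$; $M(\mathbf p)=[m_1(\mathbf p),\dots,m_r(\mathbf p)]$ where $m_j(\mathbf p)$ is the number of players with cost $j$ in $\mathbf p$; $M(\mathbf p')<M(\mathbf p)$ if there is $j$ with $m_k(\mathbf p')=m_k(\mathbf p)$ for all $k>j$ and $m_j(\mathbf p')<m_j(\mathbf p)$. *)

theory Defs
  imports Main
begin

text \<open>A finite graph G = (V, E) with E a set of (directed) edges, given as vertex pairs.
A path is represented by its vertex sequence [x0, ..., xk]; it has k edges.\<close>

definition path_edges :: "'v list \<Rightarrow> ('v \<times> 'v) set" where
  "path_edges xs = set (zip xs (tl xs))"

definition plen :: "'v list \<Rightarrow> nat" where
  "plen xs = length xs - 1"

definition is_path :: "('v \<times> 'v) set \<Rightarrow> 'v \<Rightarrow> 'v \<Rightarrow> 'v list \<Rightarrow> bool" where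
  "is_path E u v xs \<longleftrightarrow> length xs \<ge> 2 \<and> hd xs = u \<and> last xs = v \<and> distinct xs
     \<and> (\<forall>j. Suc j < length xs \<longrightarrow> (xs ! j, xs ! Suc j) \<in> E)"

definition routing_game ::
  "nat \<Rightarrow> 'v set \<Rightarrow> ('v \<times> 'v) set \<Rightarrow> (nat \<Rightarrow> 'v) \<Rightarrow> (nat \<Rightarrow> 'v) \<Rightarrow> (nat \<Rightarrow> 'v list set) \<Rightarrow> bool" where
  "routing_game N V E u v P \<longleftrightarrow> N \<ge> 1 \<and> finite V \<and> E \<subseteq> V \<times> V \<and>
     (\<forall>i<N. finite (P i) \<and> P i \<noteq> {} \<and> (\<forall>p\<in>P i. is_path E (u i) (v i) p))"

definition all_paths :: "nat \<Rightarrow> (nat \<Rightarrow> 'v list set) \<Rightarrow> 'v list set" where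
  "all_paths N P = (\<Union>i<N. P i)"

definition Lmax :: "nat \<Rightarrow> (nat \<Rightarrow> 'v list set) \<Rightarrow> nat" where
  "Lmax N P = Max (plen ` all_paths N P)"

definition is_routing :: "nat \<Rightarrow> (nat \<Rightarrow> 'v list set) \<Rightarrow> (nat \<Rightarrow> 'v list) \<Rightarrow> bool" where
  "is_routing N P p \<longleftrightarrow> (\<forall>i<N. p i \<in> P i)"

definition bucket :: "'v list \<Rightarrow> nat" where
  "bucket q = (THE k. 2 ^ k \<le> plen q \<and> plen q < 2 ^ (k + 1))"

definition norm_len :: "'v list \<Rightarrow> nat" where
  "norm_len q = 2 ^ (bucket q + 1) - 1"

definition edge_cong :: "nat \<Rightarrow> (nat \<Rightarrow> 'v list) \<Rightarrow> ('v \<times> 'v) \<Rightarrow> 'v list \<Rightarrow> nat" where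
  "edge_cong N p e q = card {j. j < N \<and> e \<in> path_edges (p j) \<and> bucket (p j) = bucket q}"

definition path_cong :: "nat \<Rightarrow> (nat \<Rightarrow> 'v list) \<Rightarrow> 'v list \<Rightarrow> nat" where
  "path_cong N p q = Max ((\<lambda>e. edge_cong N p e q) ` path_edges q)"

definition player_cost :: "nat \<Rightarrow> (nat \<Rightarrow> 'v list) \<Rightarrow> nat \<Rightarrow> nat" where
  "player_cost N p i = path_cong N p (p i) + norm_len (p i)"

definition greedy_move ::
  "nat \<Rightarrow> (nat \<Rightarrow> 'v list set) \<Rightarrow> (nat \<Rightarrow> 'v list) \<Rightarrow> nat \<Rightarrow> (nat \<Rightarrow> 'v list) \<Rightarrow> bool" where
  "greedy_move N P p i p' \<longleftrightarrow> i < N \<and> (\<exists>q\<in>P i. p' = p(i := q)) \<and>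
     player_cost N p' i < player_cost N p i"

definition order_r :: "nat \<Rightarrow> (nat \<Rightarrow> 'v list set) \<Rightarrow> nat" where
  "order_r N P = N + 2 * Lmax N P - 1"

definition m_count :: "nat \<Rightarrow> (nat \<Rightarrow> 'v list) \<Rightarrow> nat \<Rightarrow> nat" where
  "m_count N p j = card {i. i < N \<and> player_cost N p i = j}"

definition M_vec :: "nat \<Rightarrow> nat \<Rightarrow> (nat \<Rightarrow> 'v list) \<Rightarrow> nat list" where
  "M_vec N r p = map (m_count N p) [1..<r+1]"

definition M_less :: "nat \<Rightarrow> nat list \<Rightarrow> nat list \<Rightarrow> bool" where
  "M_less r Mp' Mp \<longleftrightarrow> (\<exists>j\<in>{1..r}. (\<forall>k. j < k \<and> k \<le> r \<longrightarrow> Mp' ! (k - 1) = Mp ! (k - 1))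
       \<and> Mp' ! (j - 1) < Mp ! (j - 1))"

end

theory Submission
  imports Defs
begin

lemma abstract_lex:
  fixes f g :: "nat \<Rightarrow> nat"
  assumes "i < N" "g i < f i" "\<forall>j<N. f j \<noteq> g j \<longrightarrow> g j < f j \<or> g j < f i"
  shows "\<exists>K. (\<exists>s<N. f s = K) \<and> (\<forall>k>K. card {j. j<N \<and> g j = k} = card {j. j<N \<and> f j = k})
     \<and> card {j. j<N \<and> g j = K} < card {j. j<N \<and> f j = K}"
proof -
  define S where "S = {j. j<N \<and> f j \<noteq> g j}"
  define K where "K = Max (f ` S)"
  have iS: "i \<in> S" using assms unfolding S_def by auto
  have finS: "finite S" unfolding S_def by auto
  have fS: "\<forall>j\<in>S. f j \<le> K" unfolding K_def using finS by auto
  have gS: "\<forall>j\<in>S. g j < K"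
  proof
    fix j assume j: "j \<in> S"
    then have "g j < f j \<or> g j < f i" using assms(3) unfolding S_def by auto
    then show "g j < K" using fS j iS by fastforce
  qed
  obtain s where s: "s \<in> S" "f s = K" unfolding K_def using finS iS
    by (metis (mono_tags, lifting) Max_in empty_iff finite_imageI image_iff image_is_empty)
  have A: "\<forall>k>K. card {j. j<N \<and> g j = k} = card {j. j<N \<and> f j = k}"
  proof (intro allI impI)
    fix k assume k: "K < k"
    have "{j. j<N \<and> g j = k} = {j. j<N \<and> f j = k}"
    proof (intro set_eqI iffI)
      fix j assume "j \<in> {j. j<N \<and> g j = k}"
      then show "j \<in> {j. j<N \<and> f j = k}" using gS k unfolding S_def by force
    next
      fix j assume "j \<in> {j. j<N \<and> f j = k}"
      then show "j \<in> {j. j<N \<and> g j = k}" using fS k unfolding S_def by force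
    qed
    then show "card {j. j<N \<and> g j = k} = card {j. j<N \<and> f j = k}" by simp
  qed
  have "{j. j<N \<and> g j = K} \<subset> {j. j<N \<and> f j = K}"
  proof
    show "{j. j<N \<and> g j = K} \<subseteq> {j. j<N \<and> f j = K}"
      using gS unfolding S_def by force
    have "s \<in> {j. j<N \<and> f j = K}" "s \<notin> {j. j<N \<and> g j = K}"
      using s gS unfolding S_def by auto
    then show "{j. j<N \<and> g j = K} \<noteq> {j. j<N \<and> f j = K}" by blast
  qed
  then have "card {j. j<N \<and> g j = K} < card {j. j<N \<and> f j = K}"
    by (intro psubset_card_mono) auto
  then show ?thesis using A s unfolding S_def by blast
qed

lemma bucket_ex: "n \<ge> 1 \<Longrightarrow> \<exists>k. 2 ^ k \<le> n \<and> n < (2::nat) ^ (k + 1)"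
proof (induction n rule: less_induct)
  case (less n)
  show ?case
  proof (cases "n = 1")
    case True then show ?thesis by (intro exI[of _ 0]) auto
  next
    case False
    then have "n div 2 \<ge> 1" "n div 2 < n" using less.prems by auto
    then obtain k where "2 ^ k \<le> n div 2" "n div 2 < (2::nat) ^ (k + 1)" using less.IH by blast
    then show ?thesis by (intro exI[of _ "k+1"]) auto
  qed
qed

lemma bucket_uniq:
  assumes "2 ^ k \<le> n" "n < (2::nat) ^ (k + 1)" "2 ^ l \<le> n" "n < (2::nat) ^ (l + 1)"
  shows "k = l"
proof (rule ccontr)
  assume "k \<noteq> l"
  then have "k + 1 \<le> l \<or> l + 1 \<le> k" by auto
  then show False
  proof
    assume "k + 1 \<le> l"
    then have "(2::nat) ^ (k+1) \<le> 2 ^ l" by (intro power_increasing) auto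
    then show False using assms by auto
  next
    assume "l + 1 \<le> k"
    then have "(2::nat) ^ (l+1) \<le> 2 ^ k" by (intro power_increasing) auto
    then show False using assms by auto
  qed
qed

lemma bucket_le: "plen q \<ge> 1 \<Longrightarrow> 2 ^ bucket q \<le> plen q"
proof -
  assume h: "plen q \<ge> 1"
  obtain k where k: "2 ^ k \<le> plen q \<and> plen q < (2::nat) ^ (k + 1)" using bucket_ex[OF h] by blast
  have "bucket q = k" unfolding bucket_def
    by (rule the_equality) (use k bucket_uniq in blast)+
  then show ?thesis using k by simp
qed

lemma edge_cong_incr:
  assumes "edge_cong N (p(i:=q)) e x > edge_cong N p e x"
  shows "e \<in> path_edges q \<and> bucket q = bucket x"
proof (rule ccontr)
  assume h: "\<not> (e \<in> path_edges q \<and> bucket q = bucket x)"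
  have "{j. j < N \<and> e \<in> path_edges ((p(i:=q)) j) \<and> bucket ((p(i:=q)) j) = bucket x}
     \<subseteq> {j. j < N \<and> e \<in> path_edges (p j) \<and> bucket (p j) = bucket x}"
    using h by auto
  then have "edge_cong N (p(i:=q)) e x \<le> edge_cong N p e x"
    unfolding edge_cong_def by (intro card_mono) auto
  then show False using assms by simp
qed

lemma edge_cong_bucket: "bucket x = bucket y \<Longrightarrow> edge_cong N p e x = edge_cong N p e y"
  unfolding edge_cong_def by simp

lemma path_edges_fin: "finite (path_edges q)"
  unfolding path_edges_def by simp

theorem mainTheorem9:
  fixes N :: nat and V :: "'v set" and E :: "('v \<times> 'v) set"
    and u v :: "nat \<Rightarrow> 'v" and P :: "nat \<Rightarrow> 'v list set"
    and p p' :: "nat \<Rightarrow> 'v list" and i :: nat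
  assumes "routing_game N V E u v P"
    and "is_routing N P p"
    and "greedy_move N P p i p'"
  shows "M_less (order_r N P) (M_vec N (order_r N P) p') (M_vec N (order_r N P) p)"
proof -
  obtain q where q: "q \<in> P i" "p' = p(i:=q)" and iN: "i < N"
    and gi: "player_cost N p' i < player_cost N p i"
    using assms(3) unfolding greedy_move_def by blast
  define f where "f = player_cost N p"
  define g where "g = player_cost N p'"
  have key: "\<forall>j<N. f j \<noteq> g j \<longrightarrow> g j < f j \<or> g j < f i"
  proof (intro allI impI)
    fix j assume jN: "j < N" and ne: "f j \<noteq> g j"
    show "g j < f j \<or> g j < f i"
    proof (cases "j = i")
      case True then show ?thesis using gi f_def g_def by simp
    next
      case False
      then have pj: "p' j = p j" using q by simp
      show ?thesis
      proof (cases "g j < f j")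
        case True then show ?thesis by simp
      next
        case False
        then have gt: "path_cong N p' (p j) > path_cong N p (p j)"
          using ne pj unfolding f_def g_def player_cost_def by simp
        have ne2: "path_edges (p j) \<noteq> {}"
        proof
          assume "path_edges (p j) = {}"
          then have "path_cong N p' (p j) = path_cong N p (p j)"
            unfolding path_cong_def by simp
          then show False using gt by simp
        qed
        obtain e where e: "e \<in> path_edges (p j)" "edge_cong N p' e (p j) = path_cong N p' (p j)"
          unfolding path_cong_def using Max_in[OF finite_imageI[OF path_edges_fin] ] ne2
          by (metis (no_types, lifting) image_iff image_is_empty)
        have "edge_cong N p e (p j) \<le> path_cong N p (p j)"
          unfolding path_cong_def using e(1) path_edges_fin by (intro Max_ge) auto
        then have "edge_cong N (p(i:=q)) e (p j) > edge_cong N p e (p j)"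
          using e gt q by simp
        from edge_cong_incr[OF this] have eq: "e \<in> path_edges q" "bucket q = bucket (p j)" by auto
        have "edge_cong N p' e (p j) = edge_cong N p' e q" using eq edge_cong_bucket by metis
        also have "\<dots> \<le> path_cong N p' q"
          unfolding path_cong_def using eq(1) path_edges_fin by (intro Max_ge) auto
        finally have c1: "path_cong N p' (p j) \<le> path_cong N p' q" using e by simp
        have "norm_len (p j) = norm_len q" unfolding norm_len_def using eq by simp
        then have "g j \<le> g i" using c1 pj q unfolding g_def player_cost_def by simp
        then show ?thesis using gi f_def g_def by simp
      qed
    qed
  qed
  obtain K s where s: "s < N" "f s = K"
    and A: "\<forall>k>K. card {j. j<N \<and> g j = k} = card {j. j<N \<and> f j = k}"
    and B: "card {j. j<N \<and> g j = K} < card {j. j<N \<and> f j = K}"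
    using abstract_lex[OF iN _ key] gi f_def g_def by blast
  define r where "r = order_r N P"
  have G: "routing_game N V E u v P" by fact
  have ps: "p s \<in> P s" using assms(2) s unfolding is_routing_def by auto
  have ispath: "is_path E (u s) (v s) (p s)" using G s ps unfolding routing_game_def by auto
  have len: "length (p s) \<ge> 2" using ispath unfolding is_path_def by auto
  have pl1: "plen (p s) \<ge> 1" using len unfolding plen_def by auto
  have finAll: "finite (all_paths N P)" using G unfolding routing_game_def all_paths_def by auto
  have inAll: "p s \<in> all_paths N P" using ps s unfolding all_paths_def by auto
  have L: "plen (p s) \<le> Lmax N P" unfolding Lmax_def using finAll inAll by auto
  have bl: "2 ^ bucket (p s) \<le> plen (p s)" using bucket_le[OF pl1] .
  have nl: "norm_len (p s) \<le> 2 * Lmax N P - 1" "norm_len (p s) \<ge> 1"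
  proof -
    have "2 ^ (bucket (p s) + 1) \<le> 2 * Lmax N P" using bl L by simp
    then show "norm_len (p s) \<le> 2 * Lmax N P - 1" unfolding norm_len_def by simp
    have "(1::nat) \<le> 2 ^ bucket (p s)" by (rule one_le_power) simp
    then show "norm_len (p s) \<ge> 1" unfolding norm_len_def power_add power_one_right by linarith
  qed
  have pcN: "path_cong N p (p s) \<le> N"
  proof -
    have ne: "path_edges (p s) \<noteq> {}"
    proof -
      have "(p s ! 0, p s ! 1) \<in> path_edges (p s)" unfolding path_edges_def
        using len by (cases "p s"; cases "tl (p s)") (auto)
      then show ?thesis by blast
    qed
    have "\<forall>e. edge_cong N p e (p s) \<le> N"
    proof
      fix e
      have "edge_cong N p e (p s) \<le> card {..<N}" unfolding edge_cong_def
        by (intro card_mono) auto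
      then show "edge_cong N p e (p s) \<le> N" by simp
    qed
    then show ?thesis unfolding path_cong_def using ne path_edges_fin
      by (subst Max_le_iff) auto
  qed
  have Kr: "1 \<le> K" "K \<le> r"
    using s nl pcN unfolding f_def player_cost_def r_def order_r_def by auto
  have nth: "\<And>x k. 1 \<le> k \<Longrightarrow> k \<le> r \<Longrightarrow> M_vec N r x ! (k - 1) = m_count N x k"
    unfolding M_vec_def by (subst nth_map) (simp_all del: upt_Suc add: nth_upt)
  show ?thesis unfolding r_def[symmetric] M_less_def
  proof (intro bexI[of _ K] conjI allI impI)
    show "K \<in> {1..r}" using Kr by simp
    fix k assume k: "K < k \<and> k \<le> r"
    have "M_vec N r p' ! (k - 1) = m_count N p' k" using nth[of k p'] k Kr by simp
    also have "\<dots> = m_count N p k" using A k unfolding m_count_def f_def g_def by simp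
    also have "\<dots> = M_vec N r p ! (k - 1)" using nth[of k p] k Kr by simp
    finally show "M_vec N r p' ! (k - 1) = M_vec N r p ! (k - 1)" .
  next
    show "M_vec N r p' ! (K - 1) < M_vec N r p ! (K - 1)"
      using nth[of K p] nth[of K p'] B Kr unfolding m_count_def f_def g_def by simp
  qed
qed

end
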